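(* Let $\alpha,\beta$ be real constants with $\kappa^2=4(\alpha+\beta^2)$, $\kappa>0$. Suppose $u(x,t),v(x,t)$ solve the (rescaled) system $$\begin{cases} m_t=(\partial_x m+m\partial_x)(\kappa v_x+2\beta v-u)+n\,(\kappa u_x-2\beta u-4\alpha v)_x,\\ n_t=\big[n(\kappa v_x+2\beta v-u)\big]_x,\\ m=u_{xx}-u,\qquad n=v-v_{xx}.\end{cases}$$ Define $$p=-(\kappa n_x+2\beta n+m),\qquad \rho=\kappa n,\qquad q=-\kappa v_x-2\beta v+u.$$ Then $(p,\rho,q)$ solves the two-component Camassa–Holm equation $$\begin{cases} p_t+qp_x+2pq_x-\rho\rho_x=0,\\ \rho_t+(\rho q)_x=0,\\ p=q-q_{xx}.\end{cases}$$ That is, this is a Miura-type transformation from the first system to the two-component Camassa–Holm equation.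
   Context: $(\partial_x m+m\partial_x)w$ denotes $2mw_x+m_xw$. *)

theory Defs
  imports "HOL-Analysis.Analysis"
begin

definition pdx :: "(real \<Rightarrow> real \<Rightarrow> real) \<Rightarrow> real \<Rightarrow> real \<Rightarrow> real" where
  "pdx f = (\<lambda>x t. deriv (\<lambda>y. f y t) x)"

definition pdt :: "(real \<Rightarrow> real \<Rightarrow> real) \<Rightarrow> real \<Rightarrow> real \<Rightarrow> real" where
  "pdt f = (\<lambda>x t. deriv (\<lambda>s. f x s) t)"

text \<open>Iterated partial derivative: True = d/dx, False = d/dt (applied right to left).\<close>
definition iter_pd :: "bool list \<Rightarrow> (real \<Rightarrow> real \<Rightarrow> real) \<Rightarrow> real \<Rightarrow> real \<Rightarrow> real" where
  "iter_pd ds f = foldr (\<lambda>d g. if d then pdx g else pdt g) ds f"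

definition smooth2 :: "(real \<Rightarrow> real \<Rightarrow> real) \<Rightarrow> bool" where
  "smooth2 f \<longleftrightarrow> (\<forall>ds z. (\<lambda>w. iter_pd ds f (fst w) (snd w)) differentiable (at z))"

end

theory Submission
  imports Defs
begin


definition Dx :: "(real \<Rightarrow> real \<Rightarrow> real) \<Rightarrow> bool" where
  "Dx f \<longleftrightarrow> (\<forall>x t. ((\<lambda>y. f y t) has_real_derivative pdx f x t) (at x))"
definition Dt :: "(real \<Rightarrow> real \<Rightarrow> real) \<Rightarrow> bool" where
  "Dt f \<longleftrightarrow> (\<forall>x t. ((\<lambda>s. f x s) has_real_derivative pdt f x t) (at t))"

lemma iter_pd_pdx: "iter_pd ds (pdx f) = iter_pd (ds @ [True]) f"
  by (simp add: iter_pd_def)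
lemma iter_pd_pdt: "iter_pd ds (pdt f) = iter_pd (ds @ [False]) f"
  by (simp add: iter_pd_def)

lemma smooth2_pdx[simp]: "smooth2 f \<Longrightarrow> smooth2 (pdx f)"
  unfolding smooth2_def iter_pd_pdx by blast
lemma smooth2_pdt[simp]: "smooth2 f \<Longrightarrow> smooth2 (pdt f)"
  unfolding smooth2_def iter_pd_pdt by blast

lemma smooth2_jd: "smooth2 f \<Longrightarrow> (\<lambda>w. f (fst w) (snd w)) differentiable (at z)"
  unfolding smooth2_def by (drule spec[of _ "[]"]) (cases z, simp add: iter_pd_def)

lemma smooth2_cont: "smooth2 f \<Longrightarrow> isCont (\<lambda>w. f (fst w) (snd w)) z"
  by (rule differentiable_imp_continuous_within[OF smooth2_jd])

lemma smooth2_Dx[simp]: assumes "smooth2 f" shows "Dx f"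
  unfolding Dx_def
proof (intro allI)
  fix x t
  have "(\<lambda>y::real. (y, t::real)) differentiable at x"
    by (intro differentiable_Pair differentiable_const differentiable_ident)
  from differentiable_chain_at[OF this smooth2_jd[OF assms]]
  have "(\<lambda>y. f y t) differentiable at x" by (simp add: o_def)
  then show "((\<lambda>y. f y t) has_real_derivative pdx f x t) (at x)"
    by (simp add: pdx_def DERIV_deriv_iff_real_differentiable)
qed

lemma smooth2_Dt[simp]: assumes "smooth2 f" shows "Dt f"
  unfolding Dt_def
proof (intro allI)
  fix x t
  have "(\<lambda>s::real. (x::real, s)) differentiable at t"
    by (intro differentiable_Pair differentiable_const differentiable_ident)
  from differentiable_chain_at[OF this smooth2_jd[OF assms]]
  have "(\<lambda>s. f x s) differentiable at t" by (simp add: o_def)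
  then show "((\<lambda>s. f x s) has_real_derivative pdt f x t) (at t)"
    by (simp add: pdt_def DERIV_deriv_iff_real_differentiable)
qed


lemma DxD: "Dx f \<Longrightarrow> ((\<lambda>y. f y t) has_real_derivative pdx f x t) (at x)"
  unfolding Dx_def by blast
lemma DtD: "Dt f \<Longrightarrow> ((\<lambda>s. f x s) has_real_derivative pdt f x t) (at t)"
  unfolding Dt_def by blast

lemma pdx_eqI: "((\<lambda>y. F y t) has_real_derivative D) (at x) \<Longrightarrow> pdx F x t = D"
  unfolding pdx_def by (rule DERIV_imp_deriv)
lemma pdt_eqI: "((\<lambda>s. F x s) has_real_derivative D) (at t) \<Longrightarrow> pdt F x t = D"
  unfolding pdt_def by (rule DERIV_imp_deriv)

lemma pdx_add[simp]: assumes "Dx f" "Dx g"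
  shows "pdx (\<lambda>x t. f x t + g x t) = (\<lambda>x t. pdx f x t + pdx g x t)"
proof (intro ext)
  fix x t
  show "pdx (\<lambda>x t. f x t + g x t) x t = pdx f x t + pdx g x t"
    by (rule pdx_eqI) (rule DERIV_add[OF DxD[OF assms(1)] DxD[OF assms(2)]])
qed
lemma Dx_add[simp]: assumes "Dx f" "Dx g"
  shows "Dx (\<lambda>x t. f x t + g x t)"
  unfolding Dx_def pdx_add[OF assms] by (intro allI) (rule DERIV_add[OF DxD[OF assms(1)] DxD[OF assms(2)]])

lemma pdx_diff[simp]: assumes "Dx f" "Dx g"
  shows "pdx (\<lambda>x t. f x t - g x t) = (\<lambda>x t. pdx f x t - pdx g x t)"
proof (intro ext)
  fix x t
  show "pdx (\<lambda>x t. f x t - g x t) x t = pdx f x t - pdx g x t"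
    by (rule pdx_eqI) (rule DERIV_diff[OF DxD[OF assms(1)] DxD[OF assms(2)]])
qed
lemma Dx_diff[simp]: assumes "Dx f" "Dx g"
  shows "Dx (\<lambda>x t. f x t - g x t)"
  unfolding Dx_def pdx_diff[OF assms] by (intro allI) (rule DERIV_diff[OF DxD[OF assms(1)] DxD[OF assms(2)]])

lemma pdx_mult[simp]: assumes "Dx f" "Dx g"
  shows "pdx (\<lambda>x t. f x t * g x t) = (\<lambda>x t. pdx f x t * g x t + pdx g x t * f x t)"
proof (intro ext)
  fix x t
  show "pdx (\<lambda>x t. f x t * g x t) x t = pdx f x t * g x t + pdx g x t * f x t"
    by (rule pdx_eqI) (rule DERIV_mult[OF DxD[OF assms(1)] DxD[OF assms(2)]])
qed
lemma Dx_mult[simp]: assumes "Dx f" "Dx g"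
  shows "Dx (\<lambda>x t. f x t * g x t)"
  unfolding Dx_def pdx_mult[OF assms] by (intro allI) (rule DERIV_mult[OF DxD[OF assms(1)] DxD[OF assms(2)]])

lemma pdx_cmult[simp]: assumes "Dx f"
  shows "pdx (\<lambda>x t. c * f x t) = (\<lambda>x t. c * pdx f x t)"
proof (intro ext)
  fix x t
  show "pdx (\<lambda>x t. c * f x t) x t = c * pdx f x t"
    by (rule pdx_eqI) (rule DERIV_cmult[OF DxD[OF assms(1)]])
qed
lemma Dx_cmult[simp]: assumes "Dx f"
  shows "Dx (\<lambda>x t. c * f x t)"
  unfolding Dx_def pdx_cmult[OF assms] by (intro allI) (rule DERIV_cmult[OF DxD[OF assms(1)]])

lemma pdx_minus[simp]: assumes "Dx f"
  shows "pdx (\<lambda>x t. - f x t) = (\<lambda>x t. - pdx f x t)"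
proof (intro ext)
  fix x t
  show "pdx (\<lambda>x t. - f x t) x t = - pdx f x t"
    by (rule pdx_eqI) (rule DERIV_minus[OF DxD[OF assms(1)]])
qed
lemma Dx_minus[simp]: assumes "Dx f"
  shows "Dx (\<lambda>x t. - f x t)"
  unfolding Dx_def pdx_minus[OF assms] by (intro allI) (rule DERIV_minus[OF DxD[OF assms(1)]])

lemma pdt_add[simp]: assumes "Dt f" "Dt g"
  shows "pdt (\<lambda>x t. f x t + g x t) = (\<lambda>x t. pdt f x t + pdt g x t)"
proof (intro ext)
  fix x t
  show "pdt (\<lambda>x t. f x t + g x t) x t = pdt f x t + pdt g x t"
    by (rule pdt_eqI) (rule DERIV_add[OF DtD[OF assms(1)] DtD[OF assms(2)]])
qed
lemma Dt_add[simp]: assumes "Dt f" "Dt g"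
  shows "Dt (\<lambda>x t. f x t + g x t)"
  unfolding Dt_def pdt_add[OF assms] by (intro allI) (rule DERIV_add[OF DtD[OF assms(1)] DtD[OF assms(2)]])

lemma pdt_diff[simp]: assumes "Dt f" "Dt g"
  shows "pdt (\<lambda>x t. f x t - g x t) = (\<lambda>x t. pdt f x t - pdt g x t)"
proof (intro ext)
  fix x t
  show "pdt (\<lambda>x t. f x t - g x t) x t = pdt f x t - pdt g x t"
    by (rule pdt_eqI) (rule DERIV_diff[OF DtD[OF assms(1)] DtD[OF assms(2)]])
qed
lemma Dt_diff[simp]: assumes "Dt f" "Dt g"
  shows "Dt (\<lambda>x t. f x t - g x t)"
  unfolding Dt_def pdt_diff[OF assms] by (intro allI) (rule DERIV_diff[OF DtD[OF assms(1)] DtD[OF assms(2)]])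

lemma pdt_cmult[simp]: assumes "Dt f"
  shows "pdt (\<lambda>x t. c * f x t) = (\<lambda>x t. c * pdt f x t)"
proof (intro ext)
  fix x t
  show "pdt (\<lambda>x t. c * f x t) x t = c * pdt f x t"
    by (rule pdt_eqI) (rule DERIV_cmult[OF DtD[OF assms(1)]])
qed
lemma Dt_cmult[simp]: assumes "Dt f"
  shows "Dt (\<lambda>x t. c * f x t)"
  unfolding Dt_def pdt_cmult[OF assms] by (intro allI) (rule DERIV_cmult[OF DtD[OF assms(1)]])

lemma pdt_minus[simp]: assumes "Dt f"
  shows "pdt (\<lambda>x t. - f x t) = (\<lambda>x t. - pdt f x t)"
proof (intro ext)
  fix x t
  show "pdt (\<lambda>x t. - f x t) x t = - pdt f x t"
    by (rule pdt_eqI) (rule DERIV_minus[OF DtD[OF assms(1)]])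
qed
lemma Dt_minus[simp]: assumes "Dt f"
  shows "Dt (\<lambda>x t. - f x t)"
  unfolding Dt_def pdt_minus[OF assms] by (intro allI) (rule DERIV_minus[OF DtD[OF assms(1)]])

lemma smooth2_iter[simp]: "smooth2 f \<Longrightarrow> smooth2 (iter_pd ds f)"
  unfolding smooth2_def by (simp add: iter_pd_def flip: foldr_append)

lemma iter_pd_Cons: "iter_pd (d # ds) f = (if d then pdx (iter_pd ds f) else pdt (iter_pd ds f))"
  by (simp add: iter_pd_def)

lemma iter_add: "smooth2 f \<Longrightarrow> smooth2 g \<Longrightarrow>
   iter_pd ds (\<lambda>x t. f x t + g x t) = (\<lambda>x t. iter_pd ds f x t + iter_pd ds g x t)"
  by (induction ds) (auto simp: iter_pd_Cons iter_pd_def[of "[]"])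
lemma iter_diff: "smooth2 f \<Longrightarrow> smooth2 g \<Longrightarrow>
   iter_pd ds (\<lambda>x t. f x t - g x t) = (\<lambda>x t. iter_pd ds f x t - iter_pd ds g x t)"
  by (induction ds) (auto simp: iter_pd_Cons iter_pd_def[of "[]"])
lemma iter_cmult: "smooth2 f \<Longrightarrow>
   iter_pd ds (\<lambda>x t. c * f x t) = (\<lambda>x t. c * iter_pd ds f x t)"
  by (induction ds) (auto simp: iter_pd_Cons iter_pd_def[of "[]"])

lemma smooth2_add[simp]: "smooth2 f \<Longrightarrow> smooth2 g \<Longrightarrow> smooth2 (\<lambda>x t. f x t + g x t)"
  unfolding smooth2_def by (simp add: iter_add smooth2_def differentiable_add)
lemma smooth2_diff[simp]: "smooth2 f \<Longrightarrow> smooth2 g \<Longrightarrow> smooth2 (\<lambda>x t. f x t - g x t)"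
  unfolding smooth2_def by (simp add: iter_diff smooth2_def differentiable_diff)
lemma smooth2_cmult[simp]: "smooth2 f \<Longrightarrow> smooth2 (\<lambda>x t. c * f x t)"
  unfolding smooth2_def by (simp add: iter_cmult smooth2_def differentiable_cmult_left_iff)




lemma dist_pair_le: "dist (a::real, b::real) (c, d) \<le> \<bar>a - c\<bar> + \<bar>b - d\<bar>"
proof -
  have "dist (a,b) (c,d) = norm (a - c, b - d)" unfolding dist_norm by simp
  also have "\<dots> \<le> norm (a - c) + norm (b - d)" by (rule norm_Pair_le)
  finally show ?thesis by simp
qed

lemma cont_pt:
  assumes "smooth2 A" "e > 0"
  obtains d where "d > 0" "\<And>a b. dist (a, b) (x,t) < d \<Longrightarrow> \<bar>A a b - A x t\<bar> < e"
proof -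
  from smooth2_cont[OF assms(1), of "(x,t)"] assms(2)
  obtain d where "d > 0" "\<forall>w. dist w (x,t) < d \<longrightarrow> dist (A (fst w) (snd w)) (A (fst (x,t)) (snd (x,t))) < e"
    unfolding continuous_at_eps_delta by blast
  then show ?thesis using that[of d] by (auto simp: dist_real_def)
qed

lemma schwarz:
  assumes f: "smooth2 f"
  shows "pdt (pdx f) x t = pdx (pdt f) x t"
proof (rule ccontr)
  define A where "A = pdt (pdx f)"
  define B where "B = pdx (pdt f)"
  assume ne: "pdt (pdx f) x t \<noteq> pdx (pdt f) x t"
  define e where "e = \<bar>A x t - B x t\<bar> / 4"
  have e: "e > 0" using ne unfolding e_def A_def B_def by simp
  have sA: "smooth2 A" and sB: "smooth2 B" using f unfolding A_def B_def by simp_all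
  obtain d1 where d1: "d1 > 0" "\<And>a b. dist (a, b) (x,t) < d1 \<Longrightarrow> \<bar>A a b - A x t\<bar> < e"
    using cont_pt[OF sA e] by blast
  obtain d2 where d2: "d2 > 0" "\<And>a b. dist (a, b) (x,t) < d2 \<Longrightarrow> \<bar>B a b - B x t\<bar> < e"
    using cont_pt[OF sB e] by blast
  define h where "h = min d1 d2 / 4"
  have h: "h > 0" "2 * h \<le> d1" "2 * h \<le> d2" using d1(1) d2(1) unfolding h_def by linarith+
  have close: "dist (a, b) (x, t) < 2 * h" if "x < a" "a < x + h" "t < b" "b < t + h" for a b
  proof -
    have "dist (a, b) (x, t) \<le> \<bar>a - x\<bar> + \<bar>b - t\<bar>" by (rule dist_pair_le)
    also have "\<dots> < 2 * h" using that by linarith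
    finally show ?thesis .
  qed
  define Del where "Del = f (x+h) (t+h) - f (x+h) t - f x (t+h) + f x t"
  have Dx1: "\<And>y. ((\<lambda>y. f y (t+h) - f y t) has_real_derivative (pdx f y (t+h) - pdx f y t)) (at y)"
    by (rule DERIV_diff; rule DxD; rule smooth2_Dx[OF f])
  obtain \<xi> where xi: "x < \<xi>" "\<xi> < x + h"
    and E1: "(f (x+h) (t+h) - f (x+h) t) - (f x (t+h) - f x t) = (x + h - x) * (pdx f \<xi> (t+h) - pdx f \<xi> t)"
    using MVT2[where f="\<lambda>y. f y (t+h) - f y t" and f'="\<lambda>y. pdx f y (t+h) - pdx f y t" and a=x and b="x+h", OF _ Dx1] h(1)
    by auto
  have Dt1: "\<And>s. ((\<lambda>s. pdx f \<xi> s) has_real_derivative A \<xi> s) (at s)"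
    unfolding A_def by (rule DtD; rule smooth2_Dt; rule smooth2_pdx[OF f])
  obtain \<eta> where eta: "t < \<eta>" "\<eta> < t + h" and E2: "pdx f \<xi> (t+h) - pdx f \<xi> t = (t + h - t) * A \<xi> \<eta>"
    using MVT2[where f="\<lambda>s. pdx f \<xi> s" and f'="\<lambda>s. A \<xi> s" and a=t and b="t+h", OF _ Dt1] h(1)
    by auto
  have D2: "Del = h * h * A \<xi> \<eta>"
    using E1 E2 unfolding Del_def by (simp add: algebra_simps)
  have Dt2: "\<And>s. ((\<lambda>s. f (x+h) s - f x s) has_real_derivative (pdt f (x+h) s - pdt f x s)) (at s)"
    by (rule DERIV_diff; rule DtD; rule smooth2_Dt[OF f])
  obtain \<eta>' where eta': "t < \<eta>'" "\<eta>' < t + h"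
    and E3: "(f (x+h) (t+h) - f x (t+h)) - (f (x+h) t - f x t) = (t + h - t) * (pdt f (x+h) \<eta>' - pdt f x \<eta>')"
    using MVT2[where f="\<lambda>s. f (x+h) s - f x s" and f'="\<lambda>s. pdt f (x+h) s - pdt f x s" and a=t and b="t+h", OF _ Dt2] h(1)
    by auto
  have Dx2: "\<And>y. ((\<lambda>y. pdt f y \<eta>') has_real_derivative B y \<eta>') (at y)"
    unfolding B_def by (rule DxD; rule smooth2_Dx; rule smooth2_pdt[OF f])
  obtain \<xi>' where xi': "x < \<xi>'" "\<xi>' < x + h" and E4: "pdt f (x+h) \<eta>' - pdt f x \<eta>' = (x + h - x) * B \<xi>' \<eta>'"
    using MVT2[where f="\<lambda>y. pdt f y \<eta>'" and f'="\<lambda>y. B y \<eta>'" and a=x and b="x+h", OF _ Dx2] h(1)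
    by auto
  have D4: "Del = h * h * B \<xi>' \<eta>'"
    using E3 E4 unfolding Del_def by (simp add: algebra_simps)
  have AB: "A \<xi> \<eta> = B \<xi>' \<eta>'" using D2 D4 h(1) by simp
  have 1: "\<bar>A \<xi> \<eta> - A x t\<bar> < e" using d1(2) close[OF xi eta] h by force
  have 2: "\<bar>B \<xi>' \<eta>' - B x t\<bar> < e" using d2(2) close[OF xi' eta'] h by force
  have "\<bar>A x t - B x t\<bar> < 2 * e" using 1 2 AB by linarith
  then show False using e unfolding e_def by simp
qed



theorem proposition2:
  fixes \<alpha> \<beta> \<kappa> :: real and u v :: "real \<Rightarrow> real \<Rightarrow> real"
  assumes kappa_sq: "\<kappa>\<^sup>2 = 4 * (\<alpha> + \<beta>\<^sup>2)"
    and kappa_pos: "\<kappa> > 0"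
    and smooth_u: "smooth2 u" and smooth_v: "smooth2 v"
  defines "m \<equiv> \<lambda>x t. pdx (pdx u) x t - u x t"
    and "n \<equiv> \<lambda>x t. v x t - pdx (pdx v) x t"
    and "w \<equiv> \<lambda>x t. \<kappa> * pdx v x t + 2 * \<beta> * v x t - u x t"
    and "z \<equiv> \<lambda>x t. \<kappa> * pdx u x t - 2 * \<beta> * u x t - 4 * \<alpha> * v x t"
  assumes eq_m: "\<And>x t. pdt m x t = 2 * m x t * pdx w x t + pdx m x t * w x t + n x t * pdx z x t"
    and eq_n: "\<And>x t. pdt n x t = pdx (\<lambda>x t. n x t * w x t) x t"
  defines "p \<equiv> \<lambda>x t. - (\<kappa> * pdx n x t + 2 * \<beta> * n x t + m x t)"
    and "\<rho> \<equiv> \<lambda>x t. \<kappa> * n x t"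
    and "q \<equiv> \<lambda>x t. - \<kappa> * pdx v x t - 2 * \<beta> * v x t + u x t"
  shows "(\<forall>x t. pdt p x t + q x t * pdx p x t + 2 * p x t * pdx q x t - \<rho> x t * pdx \<rho> x t = 0)
       \<and> (\<forall>x t. pdt \<rho> x t + pdx (\<lambda>x t. \<rho> x t * q x t) x t = 0)
       \<and> (\<forall>x t. p x t = q x t - pdx (pdx q) x t)"
proof (intro conjI allI)
  note su = smooth_u and sv = smooth_v
  have sm: "smooth2 m" unfolding m_def using su by simp
  have sn: "smooth2 n" unfolding n_def using sv by simp
  have sw: "smooth2 w" unfolding w_def using su sv by simp
  have sz: "smooth2 z" unfolding z_def using su sv by simp
  have qw: "q = (\<lambda>x t. - w x t)" unfolding q_def w_def by (intro ext) simp
  fix x t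
  show "p x t = q x t - pdx (pdx q) x t"
    unfolding p_def q_def n_def m_def using su sv by (simp add: algebra_simps)
next
  fix x t
  have sn: "smooth2 n" unfolding n_def using smooth_v by simp
  have sw: "smooth2 w" unfolding w_def using smooth_u smooth_v by simp
  have qw: "q = (\<lambda>x t. - w x t)" unfolding q_def w_def by (intro ext) simp
  have r: "(\<lambda>x t. \<rho> x t * q x t) = (\<lambda>x t. (-\<kappa>) * (n x t * w x t))"
    unfolding \<rho>_def qw by (intro ext) simp
  have 1: "pdx (\<lambda>x t. \<rho> x t * q x t) x t = -\<kappa> * pdx (\<lambda>x t. n x t * w x t) x t"
    unfolding r pdx_cmult[OF Dx_mult[OF smooth2_Dx[OF sn] smooth2_Dx[OF sw]]] by simp
  have 2: "pdt \<rho> x t = \<kappa> * pdt n x t" unfolding \<rho>_def using sn by simp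
  show "pdt \<rho> x t + pdx (\<lambda>x t. \<rho> x t * q x t) x t = 0"
    unfolding 1 2 eq_n by simp
next
  fix x t
  note su = smooth_u and sv = smooth_v
  have sm: "smooth2 m" unfolding m_def using su by simp
  have sn: "smooth2 n" unfolding n_def using sv by simp
  have sw: "smooth2 w" unfolding w_def using su sv by simp
  have pn: "pdt n = pdx (\<lambda>x t. n x t * w x t)" by (intro ext) (rule eq_n)
  have s1: "pdt (pdx n) x t = pdx (pdx (\<lambda>x t. n x t * w x t)) x t"
  proof -
    have "pdt (pdx n) x t = pdx (pdt n) x t" by (rule schwarz[OF sn])
    then show ?thesis unfolding pn .
  qed
  have Tp: "pdt p x t = -(\<kappa> * pdt (pdx n) x t + 2*\<beta>*pdt n x t + pdt m x t)"
    unfolding p_def using sn sm by simp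
  have al: "\<alpha> = \<kappa>\<^sup>2/4 - \<beta>\<^sup>2" using kappa_sq by (simp add: field_simps)
  show "pdt p x t + q x t * pdx p x t + 2 * p x t * pdx q x t - \<rho> x t * pdx \<rho> x t = 0"
    unfolding Tp s1 eq_m eq_n unfolding p_def \<rho>_def q_def m_def n_def w_def z_def
    using su sv apply simp
    apply (simp add: al algebra_simps power2_eq_square)
    done
qed

end
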